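(* Let $m,n\ge 1$ and $t\ge 0$ be integers and define $K_0,\dots,K_n$ as in the context. If $K_i\le 2^{n-i}$ for all $1\le i\le n$, then $m\sum_{\ell=0}^{t}\binom{n}{\ell}\le 2^n$. Hence the smallest $n$ satisfying the condition of Theorem 2 is at least the smallest $n$ satisfying the sphere-packing (Hamming) bound $m\le 2^n/\sum_{\ell=0}^t\binom{n}{\ell}$.
   Context: Binomial coefficients with negative lower index are $0$. For $1\le i\le n$ put $A_{n-i}=\gcd\{\binom{n-i}{j}: t-i+1\le j\le t\}$ (equivalently the gcd of $\binom{n-i}{j}$ over $\max(0,t-i+1)\le j\le t$). Put $K_0=m\sum_{\ell=0}^{t}\binom{n}{\ell}$, and for $i=1,\dots,n$ define recursively $K_i$ to be the least integer such that $K_i\ge K_{i-1}/2$ and $K_i\equiv m\sum_{\ell=0}^{t}\binom{n-i}{\ell}\pmod{A_{n-i}}$. *)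

theory Defs
  imports Main "HOL-Number_Theory.Cong"
begin

text \<open>A_{n-i} = gcd of binom(n-i, j) over max(0, t-i+1) <= j <= t
  (natural subtraction t+1-i truncates at 0, matching the max).\<close>
definition Agcd :: "nat \<Rightarrow> nat \<Rightarrow> nat \<Rightarrow> nat" where
  "Agcd n t i = Gcd {(n - i) choose j | j. t + 1 - i \<le> j \<and> j \<le> t}"

fun Kseq :: "nat \<Rightarrow> nat \<Rightarrow> nat \<Rightarrow> nat \<Rightarrow> int" where
  "Kseq m n t 0 = int m * (\<Sum>l\<le>t. int (n choose l))"
| "Kseq m n t (Suc i) =
     (LEAST k::int. Kseq m n t i \<le> 2 * k \<and>
        [k = int m * (\<Sum>l\<le>t. int ((n - Suc i) choose l))] (mod int (Agcd n t (Suc i))))"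

end

theory Submission
  imports Defs
begin

lemma pascal_sum: "(\<Sum>l\<le>t. Suc p choose l) = (\<Sum>l\<le>t. p choose l) + (\<Sum>l<t. p choose l)"
  proof (induction t)
  case (Suc t)
  have e: "(\<Sum>l\<le>t. p choose l) = (\<Sum>l<t. p choose l) + (p choose t)"
    by (simp add: lessThan_Suc_atMost[symmetric])
  show ?case using Suc e by simp
qed simp

lemma pascal_le: "(\<Sum>l\<le>t. Suc p choose l) \<le> 2 * (\<Sum>l\<le>t. p choose l)"
proof -
  have "(\<Sum>l<t. p choose l) \<le> (\<Sum>l\<le>t. p choose l)"
    by (rule sum_mono2) auto
  thus ?thesis using pascal_sum[where t=t and p=p] by simp
qed

lemma int_least_holds:
  fixes P :: "int \<Rightarrow> bool"
  assumes "P c" and bnd: "\<And>k. P k \<Longrightarrow> b \<le> k"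
  shows "P (LEAST k. P k)"
proof -
  define Q where "Q j = P (b + int j)" for j :: nat
  have "Q (nat (c - b))" using assms unfolding Q_def by (metis add.commute diff_add_cancel int_nat_eq diff_ge_0_iff_ge)
  hence q: "Q (LEAST j. Q j)" by (rule LeastI)
  have "(LEAST k. P k) = b + int (LEAST j. Q j)"
  proof (rule Least_equality)
    show "P (b + int (LEAST j. Q j))" using q Q_def by simp
  next
    fix y assume "P y"
    hence yb: "b \<le> y" using bnd by simp
    hence "Q (nat (y - b))" using \<open>P y\<close> unfolding Q_def by simp
    hence "(LEAST j. Q j) \<le> nat (y - b)" by (rule Least_le)
    thus "b + int (LEAST j. Q j) \<le> y" using yb by linarith
  qed
  thus ?thesis using q Q_def by simp
qed

theorem theorem3:
  fixes m n t :: nat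
  assumes "m \<ge> 1" and "n \<ge> 1"
    and "\<forall>i\<in>{1..n}. Kseq m n t i \<le> 2 ^ (n - i)"
  shows "int m * (\<Sum>l\<le>t. int (n choose l)) \<le> 2 ^ n"
proof -
  obtain p where np: "n = Suc p" using assms(2) by (cases n) auto
  define c where "c = int m * (\<Sum>l\<le>t. int ((n - Suc 0) choose l))"
  define P where "P k = (Kseq m n t 0 \<le> 2 * k \<and>
        [k = int m * (\<Sum>l\<le>t. int ((n - Suc 0) choose l))] (mod int (Agcd n t (Suc 0))))" for k
  have "(\<Sum>l\<le>t. n choose l) \<le> 2 * (\<Sum>l\<le>t. (n - Suc 0) choose l)"
    using pascal_le[where t=t and p=p] np by simp
  hence "int (\<Sum>l\<le>t. n choose l) \<le> 2 * int (\<Sum>l\<le>t. (n - Suc 0) choose l)" by linarith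
  hence "int m * int (\<Sum>l\<le>t. n choose l) \<le> int m * (2 * int (\<Sum>l\<le>t. (n - Suc 0) choose l))"
    by (rule mult_left_mono) simp
  hence "P c" unfolding P_def c_def by (simp add: algebra_simps)
  moreover have "\<And>k. P k \<Longrightarrow> Kseq m n t 0 div 2 \<le> k" unfolding P_def by linarith
  ultimately have "P (LEAST k. P k)"
    using int_least_holds[where P=P and c=c and b="Kseq m n t 0 div 2"] by blast
  moreover have "Kseq m n t 1 = (LEAST k. P k)" unfolding P_def by simp
  ultimately have "Kseq m n t 0 \<le> 2 * Kseq m n t 1" unfolding P_def by simp
  moreover have "Kseq m n t 1 \<le> 2 ^ (n - 1)" using bspec[OF assms(3), of 1] assms(2) by (simp del: Kseq.simps)
  ultimately have "Kseq m n t 0 \<le> 2 * 2 ^ (n - 1)" by linarith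
  also have "2 * 2 ^ (n - 1) = (2::int) ^ n" using np by simp
  finally show ?thesis by simp
qed

end
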